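(* Let $(G,c)$ be a connected locally finite network in which every edge has conductance $1$ (i.e. $c_{xy}\in\{0,1\}$ for all $x,y$), with fixed vertex $o$. If $\Delta_c$ is bounded on $\mathcal H_{\mathcal E_c}$, then for any bounded conductance function $b$ on $G$ with $b_{xy}=0$ whenever $c_{xy}=0$ and with $(G,b)$ connected, $\Delta_b$ is bounded on $\mathcal H_{\mathcal E_b}$.
   Context: A conductance function on a countable set $G$ is a symmetric map $c:G\times G\to[0,\infty)$ with $c_{xx}=0$; $x\sim y$ iff $c_{xy}>0$; locally finite and connected. $\mathcal E_c(u,v)=\frac12\sum_{x,y}c_{xy}\overline{(u(x)-u(y))}(v(x)-v(y))$; $\mathcal H_{\mathcal E_c}$ is the Hilbert space of finite-energy functions modulo constants with inner product $\mathcal E_c$. $v_x^{(c)}$ is the unique element of $\mathcal H_{\mathcal E_c}$ with $\langle v_x^{(c)},u\rangle_{\mathcal E_c}=u(x)-u(o)$ for all $u$. The Laplacian $(\Delta_c v)(x)=\sum_{y\sim x}c_{xy}(v(x)-v(y))$ is an operator on $\mathcal H_{\mathcal E_c}$ with domain $\mathrm{span}\{v_x^{(c)}\}_{x\in G}$. Same for $b$. A conductance function $b$ is bounded if $\sup_{x,y}b_{xy}<\infty$. *)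

theory Defs
  imports "HOL-Analysis.Analysis"
begin

text \<open>Networks on a countable vertex type 'a. Functions on vertices are complex valued;
  elements of the energy space H_E are represented by functions (modulo constants).\<close>

definition conductance :: "('a \<Rightarrow> 'a \<Rightarrow> real) \<Rightarrow> bool" where
  "conductance c \<longleftrightarrow> (\<forall>x y. c x y = c y x) \<and> (\<forall>x y. 0 \<le> c x y) \<and> (\<forall>x. c x x = 0)"

definition locally_finite_net :: "('a \<Rightarrow> 'a \<Rightarrow> real) \<Rightarrow> bool" where
  "locally_finite_net c \<longleftrightarrow> (\<forall>x. finite {y. 0 < c x y})"

definition connected_net :: "('a \<Rightarrow> 'a \<Rightarrow> real) \<Rightarrow> bool" where
  "connected_net c \<longleftrightarrow> (\<forall>x y. (x, y) \<in> {(u, v). 0 < c u v}\<^sup>*)"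

definition bounded_conductance :: "('a \<Rightarrow> 'a \<Rightarrow> real) \<Rightarrow> bool" where
  "bounded_conductance b \<longleftrightarrow> (\<exists>M. \<forall>x y. b x y \<le> M)"

definition finite_energy :: "('a \<Rightarrow> 'a \<Rightarrow> real) \<Rightarrow> ('a \<Rightarrow> complex) \<Rightarrow> bool" where
  "finite_energy c u \<longleftrightarrow> (\<lambda>(x, y). c x y * (cmod (u x - u y))\<^sup>2) summable_on UNIV"

definition energy :: "('a \<Rightarrow> 'a \<Rightarrow> real) \<Rightarrow> ('a \<Rightarrow> complex) \<Rightarrow> ('a \<Rightarrow> complex) \<Rightarrow> complex" where
  "energy c u v = (1/2) * (\<Sum>\<^sub>\<infinity>(x, y)\<in>UNIV. complex_of_real (c x y) * cnj (u x - u y) * (v x - v y))"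

text \<open>v is a representative of the dipole v_x (relative to o).\<close>
definition is_dipole :: "('a \<Rightarrow> 'a \<Rightarrow> real) \<Rightarrow> 'a \<Rightarrow> 'a \<Rightarrow> ('a \<Rightarrow> complex) \<Rightarrow> bool" where
  "is_dipole c r x v \<longleftrightarrow> finite_energy c v \<and>
     (\<forall>u. finite_energy c u \<longrightarrow> energy c v u = u x - u r)"

text \<open>Domain of the Laplacian: span{v_x} (complex linear span of dipole representatives;
  this contains the constants, so it is exactly the set of representatives of span{v_x}).\<close>
definition laplacian_domain :: "('a \<Rightarrow> 'a \<Rightarrow> real) \<Rightarrow> 'a \<Rightarrow> ('a \<Rightarrow> complex) set" where
  "laplacian_domain c r = {u. \<exists>F a w. finite F \<and> (\<forall>x\<in>F. is_dipole c r x (w x)) \<and>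
      u = (\<lambda>z. \<Sum>x\<in>F. a x * w x z)}"

definition laplacian :: "('a \<Rightarrow> 'a \<Rightarrow> real) \<Rightarrow> ('a \<Rightarrow> complex) \<Rightarrow> ('a \<Rightarrow> complex)" where
  "laplacian c v = (\<lambda>x. \<Sum>y\<in>{y. 0 < c x y}. complex_of_real (c x y) * (v x - v y))"

definition laplacian_bounded :: "('a \<Rightarrow> 'a \<Rightarrow> real) \<Rightarrow> 'a \<Rightarrow> bool" where
  "laplacian_bounded c r \<longleftrightarrow> (\<exists>C. \<forall>u\<in>laplacian_domain c r.
      finite_energy c (laplacian c u) \<and>
      sqrt (Re (energy c (laplacian c u) (laplacian c u))) \<le> C * sqrt (Re (energy c u u)))"

end

theory Submission
  imports Defs
begin


definition Qr :: "('a \<Rightarrow> 'a \<Rightarrow> real) \<Rightarrow> ('a \<Rightarrow> real) \<Rightarrow> 'a \<times> 'a \<Rightarrow> real" where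
  "Qr c f = (\<lambda>p. c (fst p) (snd p) * (f (fst p) - f (snd p))\<^sup>2)"
definition Rr :: "('a \<Rightarrow> 'a \<Rightarrow> real) \<Rightarrow> ('a \<Rightarrow> real) \<Rightarrow> ('a \<Rightarrow> real) \<Rightarrow> 'a \<times> 'a \<Rightarrow> real" where
  "Rr c f g = (\<lambda>p. c (fst p) (snd p) * (f (fst p) - f (snd p)) * (g (fst p) - g (snd p)))"
definition fe :: "('a \<Rightarrow> 'a \<Rightarrow> real) \<Rightarrow> ('a \<Rightarrow> real) \<Rightarrow> bool" where
  "fe c f \<longleftrightarrow> Qr c f summable_on UNIV"
definition Er :: "('a \<Rightarrow> 'a \<Rightarrow> real) \<Rightarrow> ('a \<Rightarrow> real) \<Rightarrow> real" where
  "Er c f = infsum (Qr c f) UNIV"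
definition Br :: "('a \<Rightarrow> 'a \<Rightarrow> real) \<Rightarrow> ('a \<Rightarrow> real) \<Rightarrow> ('a \<Rightarrow> real) \<Rightarrow> real" where
  "Br c f g = infsum (Rr c f g) UNIV"

lemma real_cmp:
  fixes f g :: "'b \<Rightarrow> real"
  assumes "g summable_on A" "\<And>x. x \<in> A \<Longrightarrow> \<bar>f x\<bar> \<le> g x"
  shows "f summable_on A"
proof -
  have 1: "(\<lambda>x. norm (g x)) summable_on A" using assms(1) summable_on_iff_abs_summable_on_real by blast
  have 2: "\<And>x. x \<in> A \<Longrightarrow> norm (f x) \<le> norm (g x)" using assms(2) by force
  have "(\<lambda>x. norm (f x)) summable_on A"
    using Infinite_Sum.abs_summable_on_comparison_test[of g A f, OF 1 2] by simp
  thus ?thesis using summable_on_iff_abs_summable_on_real by blast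
qed

lemma cplx_cmp:
  fixes f :: "'b \<Rightarrow> complex" and g :: "'b \<Rightarrow> real"
  assumes "g summable_on A" "\<And>x. x \<in> A \<Longrightarrow> cmod (f x) \<le> g x"
  shows "f summable_on A"
proof -
  have "(\<lambda>x. norm (f x)) summable_on A"
    by (rule real_cmp[OF assms(1)]) (use assms(2) in auto)
  thus ?thesis using summable_on_iff_abs_summable_on_complex by blast
qed

lemma Qr_nonneg: "\<forall>a b. 0 \<le> c a b \<Longrightarrow> 0 \<le> Qr c f p"
  by (simp add: Qr_def)

lemma abs_mult_le_sq: "\<bar>(a::real) * b\<bar> \<le> a\<^sup>2 + b\<^sup>2"
proof -
  have "0 \<le> (\<bar>a\<bar> - \<bar>b\<bar>)\<^sup>2" by simp
  hence "2 * \<bar>a\<bar> * \<bar>b\<bar> \<le> a\<^sup>2 + b\<^sup>2" by (simp add: power2_eq_square algebra_simps)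
  moreover have "\<bar>a * b\<bar> = \<bar>a\<bar> * \<bar>b\<bar>" by (simp add: abs_mult)
  moreover have "0 \<le> \<bar>a\<bar> * \<bar>b\<bar>" by simp
  ultimately show ?thesis by linarith
qed

lemma Rr_bound: "\<forall>a b. 0 \<le> c a b \<Longrightarrow> \<bar>Rr c f g p\<bar> \<le> Qr c f p + Qr c g p"
proof -
  assume n: "\<forall>a b. 0 \<le> c a b"
  define k where "k = c (fst p) (snd p)"
  define s where "s = f (fst p) - f (snd p)"
  define t where "t = g (fst p) - g (snd p)"
  have k: "0 \<le> k" using n k_def by simp
  have "\<bar>Rr c f g p\<bar> = k * \<bar>s * t\<bar>" using n by (simp add: Rr_def k_def s_def t_def abs_mult)
  also have "\<dots> \<le> k * (s\<^sup>2 + t\<^sup>2)" by (rule mult_left_mono[OF abs_mult_le_sq k])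
  also have "\<dots> = Qr c f p + Qr c g p" by (simp add: Qr_def k_def s_def t_def algebra_simps)
  finally show ?thesis .
qed

lemma Rr_summable: "\<forall>a b. 0 \<le> c a b \<Longrightarrow> fe c f \<Longrightarrow> fe c g \<Longrightarrow> Rr c f g summable_on UNIV"
  by (rule real_cmp[of "\<lambda>p. Qr c f p + Qr c g p"]) (auto simp: fe_def intro: summable_on_add Rr_bound)

lemma Qr_lin: "Qr c (\<lambda>z. f z + t * g z) p = Qr c f p + 2 * t * Rr c f g p + t\<^sup>2 * Qr c g p"
  by (simp add: Qr_def Rr_def power2_eq_square algebra_simps)

lemma Rr_lin: "Rr c f (\<lambda>z. g z + t * h z) p = Rr c f g p + t * Rr c f h p"
  by (simp add: Rr_def algebra_simps)

lemma fe_lin: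
  assumes n: "\<forall>a b. 0 \<le> c a b" and "fe c f" "fe c g"
  shows "fe c (\<lambda>z. f z + t * g z)"
proof -
  have "(\<lambda>p. Qr c f p + 2 * t * Rr c f g p + t\<^sup>2 * Qr c g p) summable_on UNIV"
    using assms Rr_summable[OF n assms(2,3)] unfolding fe_def
    by (intro summable_on_add summable_on_cmult_right) auto
  thus ?thesis unfolding fe_def Qr_lin .
qed

lemma Er_lin:
  assumes n: "\<forall>a b. 0 \<le> c a b" and "fe c f" "fe c g"
  shows "Er c (\<lambda>z. f z + t * g z) = Er c f + 2 * t * Br c f g + t\<^sup>2 * Er c g"
proof -
  have s1: "Qr c f summable_on UNIV" "Qr c g summable_on UNIV" using assms fe_def by auto
  have s2: "Rr c f g summable_on UNIV" using Rr_summable[OF n assms(2,3)] .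
  have "Er c (\<lambda>z. f z + t * g z) = infsum (\<lambda>p. Qr c f p + 2 * t * Rr c f g p + t\<^sup>2 * Qr c g p) UNIV"
    unfolding Er_def Qr_lin ..
  also have "\<dots> = infsum (Qr c f) UNIV + infsum (\<lambda>p. 2 * t * Rr c f g p) UNIV + infsum (\<lambda>p. t\<^sup>2 * Qr c g p) UNIV"
    using s1 s2 by (simp add: infsum_add summable_on_add summable_on_cmult_right)
  also have "\<dots> = Er c f + 2 * t * Br c f g + t\<^sup>2 * Er c g"
    using s1 s2 by (simp add: infsum_cmult_right Er_def Br_def)
  finally show ?thesis .
qed

lemma Br_lin:
  assumes n: "\<forall>a b. 0 \<le> c a b" and "fe c f" "fe c g" "fe c h"
  shows "Br c f (\<lambda>z. g z + t * h z) = Br c f g + t * Br c f h"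
proof -
  have s: "Rr c f g summable_on UNIV" "Rr c f h summable_on UNIV"
    using Rr_summable[OF n] assms by auto
  have "Br c f (\<lambda>z. g z + t * h z) = infsum (\<lambda>p. Rr c f g p + t * Rr c f h p) UNIV"
    unfolding Br_def Rr_lin ..
  also have "\<dots> = Br c f g + t * Br c f h"
    using s by (simp add: infsum_add summable_on_cmult_right infsum_cmult_right Br_def)
  finally show ?thesis .
qed

lemma Br_const: "Br c f (\<lambda>z. g z + k) = Br c f g"
  unfolding Br_def Rr_def by simp

lemma fe_const: "fe c f \<Longrightarrow> fe c (\<lambda>z. f z + k)"
  unfolding fe_def Qr_def by simp

lemma Er_const: "Er c (\<lambda>z. f z + k) = Er c f"
  unfolding Er_def Qr_def by simp

lemma fe_scale: "fe c f \<Longrightarrow> fe c (\<lambda>z. t * f z)"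
proof -
  assume "fe c f"
  hence "(\<lambda>p. t\<^sup>2 * Qr c f p) summable_on UNIV" unfolding fe_def by (rule summable_on_cmult_right)
  moreover have "(\<lambda>p. t\<^sup>2 * Qr c f p) = Qr c (\<lambda>z. t * f z)"
    by (auto simp: Qr_def power2_eq_square algebra_simps)
  ultimately show ?thesis unfolding fe_def by simp
qed

lemma Er_scale: "fe c f \<Longrightarrow> Er c (\<lambda>z. t * f z) = t\<^sup>2 * Er c f"
proof -
  assume "fe c f"
  have "(\<lambda>p. t\<^sup>2 * Qr c f p) = Qr c (\<lambda>z. t * f z)"
    by (auto simp: Qr_def power2_eq_square algebra_simps)
  hence "Er c (\<lambda>z. t * f z) = infsum (\<lambda>p. t\<^sup>2 * Qr c f p) UNIV" unfolding Er_def by simp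
  also have "\<dots> = t\<^sup>2 * Er c f" using \<open>fe c f\<close> by (simp add: infsum_cmult_right fe_def Er_def)
  finally show ?thesis .
qed

lemma Br_scale: "Br c (\<lambda>z. t * f z) g = t * Br c f g"
proof -
  have "Rr c (\<lambda>z. t * f z) g = (\<lambda>p. t * Rr c f g p)"
    by (auto simp: Rr_def algebra_simps)
  hence "Br c (\<lambda>z. t * f z) g = infsum (\<lambda>p. t * Rr c f g p) UNIV" unfolding Br_def by simp
  also have "\<dots> = t * Br c f g" unfolding Br_def
    by (cases "t = 0") (auto simp: infsum_cmult_right')
  finally show ?thesis .
qed

lemma Br_self: "Br c f f = Er c f"
  unfolding Br_def Er_def Rr_def Qr_def by (simp add: power2_eq_square mult.assoc)

lemma Br_sym: "Br c f g = Br c g f"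
  unfolding Br_def Rr_def by (simp add: algebra_simps)

lemma Er_nonneg: "\<forall>a b. 0 \<le> c a b \<Longrightarrow> 0 \<le> Er c f"
  unfolding Er_def by (rule infsum_nonneg) (simp add: Qr_def)

lemma Qr_le_Er: "\<forall>a b. 0 \<le> c a b \<Longrightarrow> fe c f \<Longrightarrow> finite P \<Longrightarrow> sum (Qr c f) P \<le> Er c f"
  unfolding Er_def fe_def by (rule finite_sum_le_infsum) (auto simp: Qr_def)


lemma fe_add: "\<forall>a b. 0 \<le> c a b \<Longrightarrow> fe c f \<Longrightarrow> fe c g \<Longrightarrow> fe c (\<lambda>z. f z + g z)"
  using fe_lin[of c f g 1] by simp
lemma fe_diff: "\<forall>a b. 0 \<le> c a b \<Longrightarrow> fe c f \<Longrightarrow> fe c g \<Longrightarrow> fe c (\<lambda>z. f z - g z)"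
  using fe_lin[of c f g "-1"] by simp
lemma Er_add: "\<forall>a b. 0 \<le> c a b \<Longrightarrow> fe c f \<Longrightarrow> fe c g \<Longrightarrow>
   Er c (\<lambda>z. f z + g z) = Er c f + 2 * Br c f g + Er c g"
  using Er_lin[of c f g 1] by simp
lemma Er_diff: "\<forall>a b. 0 \<le> c a b \<Longrightarrow> fe c f \<Longrightarrow> fe c g \<Longrightarrow>
   Er c (\<lambda>z. f z - g z) = Er c f - 2 * Br c f g + Er c g"
  using Er_lin[of c f g "-1"] by simp
lemma fe_div: "fe c f \<Longrightarrow> fe c (\<lambda>z. f z / k)"
  using fe_scale[of c f "1/k"] by simp
lemma Er_div: "fe c f \<Longrightarrow> Er c (\<lambda>z. f z / k) = Er c f / k\<^sup>2"
  using Er_scale[of c f "1/k"] by (simp add: power_divide)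


lemma Br_diff: "\<forall>a b. 0 \<le> c a b \<Longrightarrow> fe c f \<Longrightarrow> fe c g \<Longrightarrow> fe c h \<Longrightarrow>
   Br c f (\<lambda>z. g z - h z) = Br c f g - Br c f h"
  using Br_lin[of c f g h "-1"] by simp



lemma edge_bound:
  assumes c01: "\<forall>a b. c a b = 0 \<or> c a b = 1" and e: "0 < c a b" and f: "fe c f"
  shows "\<bar>f a - f b\<bar> \<le> sqrt (Er c f)"
proof -
  have nn: "\<forall>a b. 0 \<le> c a b" using c01 by (metis order.refl zero_le_one)
  have c1: "c a b = 1" using c01 e by (metis less_irrefl)
  have "sum (Qr c f) {(a,b)} \<le> Er c f" by (rule Qr_le_Er[OF nn f]) simp
  hence "(f a - f b)\<^sup>2 \<le> Er c f" by (simp add: Qr_def c1)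
  hence "sqrt ((f a - f b)\<^sup>2) \<le> sqrt (Er c f)" by (rule real_sqrt_le_mono)
  thus ?thesis by simp
qed

lemma path_bound:
  assumes c01: "\<forall>a b. c a b = 0 \<or> c a b = 1"
    and p: "(z, r) \<in> {(u, v). 0 < c u v}\<^sup>*"
  shows "\<exists>k\<ge>0. \<forall>f. fe c f \<longrightarrow> \<bar>f z - f r\<bar> \<le> k * sqrt (Er c f)"
  using p
proof (induction rule: rtrancl_induct)
  case base
  show ?case by (rule exI[of _ 0]) simp
next
  case (step a b)
  then obtain k where k: "k \<ge> 0" "\<forall>f. fe c f \<longrightarrow> \<bar>f z - f a\<bar> \<le> k * sqrt (Er c f)" by blast
  have e: "0 < c a b" using step by simp
  show ?case
  proof (rule exI[of _ "k + 1"], intro conjI allI impI)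
    show "0 \<le> k + 1" using k by simp
    fix f assume f: "fe c f"
    have "\<bar>f z - f b\<bar> \<le> \<bar>f z - f a\<bar> + \<bar>f a - f b\<bar>" by simp
    also have "\<dots> \<le> k * sqrt (Er c f) + sqrt (Er c f)"
      using k(2) f edge_bound[OF c01 e f] by (meson add_mono)
    finally show "\<bar>f z - f b\<bar> \<le> (k + 1) * sqrt (Er c f)" by (simp add: algebra_simps)
  qed
qed

lemma fe_finsupp:
  assumes cc: "conductance c" and lf: "locally_finite_net c"
    and S: "finite S" and f0: "\<forall>z. z \<notin> S \<longrightarrow> f z = 0"
  shows "fe c f"
proof -
  define T where "T = Sigma S (\<lambda>a. {b. 0 < c a b}) \<union> prod.swap ` Sigma S (\<lambda>a. {b. 0 < c a b})"
  have T0: "finite (Sigma S (\<lambda>a. {b. 0 < c a b}))"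
    using S lf unfolding locally_finite_net_def by (intro finite_SigmaI) auto
  have T: "finite T" unfolding T_def using T0 by blast
  have z: "Qr c f p = 0" if "p \<notin> T" for p
  proof (rule ccontr)
    assume ne: "Qr c f p \<noteq> 0"
    obtain a b where p: "p = (a, b)" by fastforce
    have nn: "0 \<le> c a b" using cc unfolding conductance_def by auto
    have "c a b \<noteq> 0" "f a \<noteq> f b" using ne p by (auto simp: Qr_def)
    hence pos: "0 < c a b" and ab: "a \<in> S \<or> b \<in> S" using nn f0 by auto
    have pos': "0 < c b a" using pos cc unfolding conductance_def by metis
    have "p \<in> T"
    proof (cases "a \<in> S")
      case True thus ?thesis using pos p unfolding T_def by blast
    next
      case False
      hence "(b, a) \<in> Sigma S (\<lambda>a. {b. 0 < c a b})" using ab pos' by auto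
      hence "prod.swap (b, a) \<in> prod.swap ` Sigma S (\<lambda>a. {b. 0 < c a b})" by (rule imageI)
      thus ?thesis using p unfolding T_def by simp
    qed
    thus False using that by simp
  qed
  have "Qr c f summable_on UNIV \<longleftrightarrow> Qr c f summable_on T"
    by (rule summable_on_cong_neutral) (use z in auto)
  thus ?thesis unfolding fe_def using T by simp
qed

definition delta :: "'a \<Rightarrow> 'a \<Rightarrow> real" where "delta z = (\<lambda>w. if w = z then 1 else 0)"

lemma fe_delta: "conductance c \<Longrightarrow> locally_finite_net c \<Longrightarrow> fe c (delta z)"
  by (rule fe_finsupp[of c "{z}"]) (auto simp: delta_def)

lemma Br_delta:
  assumes cc: "conductance c" and lf: "locally_finite_net c"
  shows "Br c f (delta z) = 2 * (\<Sum>b\<in>{b. 0 < c z b}. c z b * (f z - f b))"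
proof -
  define N where "N = {b. 0 < c z b}"
  have N: "finite N" using lf unfolding N_def locally_finite_net_def by auto
  have sym: "\<And>a b. c a b = c b a" and nn: "\<And>a b. 0 \<le> c a b" and zz: "c z z = 0"
    using cc unfolding conductance_def by auto
  have zN: "z \<notin> N" using zz N_def by simp
  have N': "\<And>b. (0 < c b z) = (b \<in> N)" using sym N_def by simp
  define S1 where "S1 = (\<lambda>b. (z, b)) ` N"
  define S2 where "S2 = (\<lambda>b. (b, z)) ` N"
  have z: "Rr c f (delta z) p = 0" if "p \<notin> S1 \<union> S2" for p
  proof (rule ccontr)
    assume ne: "Rr c f (delta z) p \<noteq> 0"
    obtain a b where p: "p = (a, b)" by fastforce
    have ne2: "c a b * (f a - f b) * (delta z a - delta z b) \<noteq> 0" using ne p by (simp add: Rr_def)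
    have "c a b \<noteq> 0" using ne2 by auto
    hence pos: "0 < c a b" using nn[of a b] by linarith
    have "delta z a \<noteq> delta z b" using ne2 by auto
    hence ab: "a = z \<or> b = z" unfolding delta_def by metis
    have "p \<in> S1 \<union> S2"
    proof (cases "a = z")
      case True thus ?thesis using pos p unfolding S1_def N_def by blast
    next
      case False
      hence "b = z" using ab by simp
      hence "a \<in> N" using pos N' by simp
      thus ?thesis using p \<open>b = z\<close> unfolding S2_def by blast
    qed
    thus False using that by simp
  qed
  have fin1: "finite S1" "finite S2" using N S1_def S2_def by simp_all
  have disj: "S1 \<inter> S2 = {}" using zN unfolding S1_def S2_def by blast
  have "Br c f (delta z) = infsum (Rr c f (delta z)) (S1 \<union> S2)"
    unfolding Br_def by (rule infsum_cong_neutral) (use z in auto)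
  also have "\<dots> = sum (Rr c f (delta z)) (S1 \<union> S2)" using fin1 by simp
  also have "\<dots> = sum (Rr c f (delta z)) S1 + sum (Rr c f (delta z)) S2"
    by (rule sum.union_disjoint[OF fin1 disj])
  also have "sum (Rr c f (delta z)) S1 = (\<Sum>b\<in>N. Rr c f (delta z) (z, b))"
    unfolding S1_def by (rule sum.reindex[unfolded comp_def]) (simp add: inj_on_def)
  also have "\<dots> = (\<Sum>b\<in>N. c z b * (f z - f b))"
  proof (rule sum.cong)
    fix b assume "b \<in> N" hence "b \<noteq> z" using zN by auto
    thus "Rr c f (delta z) (z, b) = c z b * (f z - f b)" by (simp add: Rr_def delta_def)
  qed simp
  also have "sum (Rr c f (delta z)) S2 = (\<Sum>b\<in>N. Rr c f (delta z) (b, z))"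
    unfolding S2_def by (rule sum.reindex[unfolded comp_def]) (simp add: inj_on_def)
  also have "\<dots> = (\<Sum>b\<in>N. c z b * (f z - f b))"
  proof (rule sum.cong)
    fix b assume "b \<in> N" hence "b \<noteq> z" using zN by auto
    moreover have "c b z = c z b" by (rule sym)
    ultimately show "Rr c f (delta z) (b, z) = c z b * (f z - f b)" by (simp add: Rr_def delta_def algebra_simps)
  qed simp
  finally show ?thesis unfolding N_def by simp
qed



lemma cauchy_from_bound:
  fixes X :: "nat \<Rightarrow> real"
  assumes k: "k \<ge> 0" and b: "\<forall>n n'. \<bar>X n - X n'\<bar> \<le> k * sqrt (2 * inverse (real (Suc n)) + 2 * inverse (real (Suc n')))"
  shows "Cauchy X"
proof (rule CauchyI)
  fix \<epsilon> :: real assume e: "0 < \<epsilon>"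
  define \<delta> where "\<delta> = (\<epsilon> / (k + 1))\<^sup>2 / 4"
  have d: "0 < \<delta>" using e k by (simp add: \<delta>_def)
  obtain N where N: "inverse (real (Suc N)) < \<delta>" using reals_Archimedean[OF d] by blast
  show "\<exists>M. \<forall>m\<ge>M. \<forall>n\<ge>M. norm (X m - X n) < \<epsilon>"
  proof (intro exI allI impI)
    fix m n assume m: "N \<le> m" and n: "N \<le> n"
    have im: "inverse (real (Suc m)) \<le> inverse (real (Suc N))" using m
      by (simp add: le_imp_inverse_le)
    have inn: "inverse (real (Suc n)) \<le> inverse (real (Suc N))" using n
      by (simp add: le_imp_inverse_le)
    have "2 * inverse (real (Suc m)) + 2 * inverse (real (Suc n)) < 4 * \<delta>" using im inn N by linarith
    also have "4 * \<delta> = (\<epsilon> / (k + 1))\<^sup>2" by (simp add: \<delta>_def)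
    finally have "sqrt (2 * inverse (real (Suc m)) + 2 * inverse (real (Suc n))) < \<epsilon> / (k + 1)"
      using e k by (metis abs_of_pos divide_pos_pos real_sqrt_abs real_sqrt_less_mono
          add_nonneg_pos zero_less_one)
    hence lt: "(k + 1) * sqrt (2 * inverse (real (Suc m)) + 2 * inverse (real (Suc n))) < \<epsilon>"
      using k by (simp add: pos_less_divide_eq mult.commute)
    have "\<bar>X m - X n\<bar> \<le> k * sqrt (2 * inverse (real (Suc m)) + 2 * inverse (real (Suc n)))" using b by blast
    also have "\<dots> \<le> (k + 1) * sqrt (2 * inverse (real (Suc m)) + 2 * inverse (real (Suc n)))"
      by (intro mult_right_mono) auto
    finally show "norm (X m - X n) < \<epsilon>" using lt by simp
  qed
qed

lemma quad_nonneg_imp: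
  fixes B H :: real
  assumes H: "H \<ge> 0" and q: "\<forall>t. 0 \<le> 2 * t * B + t\<^sup>2 * H"
  shows "B = 0"
proof (rule ccontr)
  assume B: "B \<noteq> 0"
  define s where "s = 1 / (H + 1)"
  have s: "0 < s" "s * H < 1" using H by (auto simp: s_def field_simps)
  have "0 \<le> 2 * (- B * s) * B + (- B * s)\<^sup>2 * H" using q by blast
  also have "\<dots> = (s * B\<^sup>2) * (s * H - 2)" by (simp add: power2_eq_square algebra_simps)
  finally have le: "0 \<le> (s * B\<^sup>2) * (s * H - 2)" .
  have "0 < s * B\<^sup>2" using s B by simp
  moreover have "s * H - 2 < 0" using s by simp
  ultimately have "(s * B\<^sup>2) * (s * H - 2) < 0" by (rule mult_pos_neg)
  thus False using le by simp
qed

lemma dipole_real: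
  assumes cc: "conductance c" and lf: "locally_finite_net c" and cn: "connected_net c"
    and c01: "\<forall>a b. c a b = 0 \<or> c a b = 1"
  shows "\<exists>f. fe c f \<and> (\<forall>g. fe c g \<longrightarrow> Br c f g = 2 * (g x - g r))"
proof (cases "x = r")
  case True
  show ?thesis
    by (rule exI[of _ "\<lambda>z. 0"]) (simp add: True fe_def Br_def Qr_def Rr_def)
next
  case False
  have nn: "\<forall>a b. 0 \<le> c a b" using cc unfolding conductance_def by auto
  have conn: "\<And>a b. (a, b) \<in> {(u, v). 0 < c u v}\<^sup>*" using cn unfolding connected_net_def by blast
  define A where "A = {f. fe c f \<and> f r = 0 \<and> f x = 1}"
  define m where "m = Inf (Er c ` A)"
  have dA: "delta x \<in> A" using fe_delta[OF cc lf] False by (simp add: A_def delta_def)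
  obtain kx where kx: "kx \<ge> 0" "\<forall>f. fe c f \<longrightarrow> \<bar>f x - f r\<bar> \<le> kx * sqrt (Er c f)"
    using path_bound[OF c01 conn[of x r]] by blast
  have lowA: "1 \<le> kx * sqrt (Er c f)" if "f \<in> A" for f using kx(2) that by (auto simp: A_def)
  have kpos: "0 < kx" using lowA[OF dA] kx(1) by (cases "kx = 0") auto
  have Elow: "1 / kx\<^sup>2 \<le> Er c f" if "f \<in> A" for f
  proof -
    have "1 \<le> (kx * sqrt (Er c f))\<^sup>2" using lowA[OF that] by (simp add: one_le_power)
    also have "\<dots> = kx\<^sup>2 * Er c f" using Er_nonneg[OF nn] by (simp add: power_mult_distrib)
    finally show ?thesis using kpos by (simp add: field_simps)
  qed
  have bdd: "bdd_below (Er c ` A)" unfolding bdd_below_def using Er_nonneg[OF nn] by blast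
  have ne: "Er c ` A \<noteq> {}" using dA by blast
  have mle: "m \<le> Er c f" if "f \<in> A" for f unfolding m_def using bdd that by (simp add: cInf_lower)
  have mlow: "1 / kx\<^sup>2 \<le> m" unfolding m_def using ne Elow by (auto intro!: cInf_greatest)
  have mpos: "0 < m" using mlow kpos by (smt (verit) divide_pos_pos zero_less_power)
  have "\<forall>n. \<exists>f\<in>A. Er c f < m + inverse (real (Suc n))"
  proof
    fix n
    have "Inf (Er c ` A) < m + inverse (real (Suc n))" unfolding m_def by simp
    then obtain y where "y \<in> Er c ` A" "y < m + inverse (real (Suc n))" using cInf_lessD[OF ne] by blast
    thus "\<exists>f\<in>A. Er c f < m + inverse (real (Suc n))" by blast
  qed
  then obtain F where F: "\<And>n. F n \<in> A" "\<And>n. Er c (F n) < m + inverse (real (Suc n))" by metis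
  have Ffe: "\<And>n. fe c (F n)" and Fr: "\<And>n. F n r = 0" and Fx: "\<And>n. F n x = 1"
    using F(1) by (auto simp: A_def)
  define e where "e n = inverse (real (Suc n))" for n
  have cauchyE: "Er c (\<lambda>z. F n z - F n' z) \<le> 2 * e n + 2 * e n'" for n n'
  proof -
    define B where "B = Br c (F n) (F n')"
    have sfe: "fe c (\<lambda>z. F n z + F n' z)" by (rule fe_add[OF nn Ffe Ffe])
    have hfe: "fe c (\<lambda>z. (F n z + F n' z) / 2)" by (rule fe_div[OF sfe])
    have h: "(\<lambda>z. (F n z + F n' z) / 2) \<in> A"
      unfolding A_def mem_Collect_eq using hfe Fr[of n] Fr[of n'] Fx[of n] Fx[of n']
      by simp
    have "m \<le> Er c (\<lambda>z. (F n z + F n' z) / 2)" using mle[OF h] .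
    also have "\<dots> = Er c (\<lambda>z. F n z + F n' z) / 4"
      using Er_div[OF sfe, of 2] by simp
    also have "Er c (\<lambda>z. F n z + F n' z) = Er c (F n) + 2 * B + Er c (F n')"
      using Er_add[OF nn Ffe[of n] Ffe[of n']] by (simp add: B_def)
    finally have 1: "4 * m \<le> Er c (F n) + 2 * B + Er c (F n')" by simp
    have 2: "Er c (\<lambda>z. F n z - F n' z) = Er c (F n) - 2 * B + Er c (F n')"
      using Er_diff[OF nn Ffe[of n] Ffe[of n']] by (simp add: B_def)
    show ?thesis using 1 2 F(2)[of n] F(2)[of n'] unfolding e_def by linarith
  qed
  have cauchy: "Cauchy (\<lambda>n. F n z)" for z
  proof -
    obtain kz where kz: "kz \<ge> 0" "\<forall>f. fe c f \<longrightarrow> \<bar>f z - f r\<bar> \<le> kz * sqrt (Er c f)"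
      using path_bound[OF c01 conn[of z r]] by blast
    show ?thesis
    proof (rule cauchy_from_bound[OF kz(1)], intro allI)
      fix n n'
      have fd: "fe c (\<lambda>w. F n w - F n' w)" by (rule fe_diff[OF nn Ffe Ffe])
      have "\<bar>F n z - F n' z\<bar> = \<bar>(F n z - F n' z) - (F n r - F n' r)\<bar>" using Fr by simp
      also have "\<dots> \<le> kz * sqrt (Er c (\<lambda>w. F n w - F n' w))" using kz(2) fd by blast
      also have "\<dots> \<le> kz * sqrt (2 * e n + 2 * e n')"
        using cauchyE[of n n'] kz(1) by (intro mult_left_mono real_sqrt_le_mono) auto
      finally show "\<bar>F n z - F n' z\<bar> \<le> kz * sqrt (2 * inverse (real (Suc n)) + 2 * inverse (real (Suc n')))"
        unfolding e_def .
    qed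
  qed
  define v where "v z = lim (\<lambda>n. F n z)" for z
  have conv: "(\<lambda>n. F n z) \<longlonglongrightarrow> v z" for z
    using cauchy[of z] unfolding v_def by (simp add: Cauchy_convergent_iff convergent_LIMSEQ_iff)
  have fatou: "sum (Qr c v) P \<le> m" if P: "finite P" for P
  proof (rule LIMSEQ_le)
    show "(\<lambda>n. sum (Qr c (F n)) P) \<longlonglongrightarrow> sum (Qr c v) P"
      unfolding Qr_def by (intro tendsto_intros conv)
    show "(\<lambda>n. m + inverse (real (Suc n))) \<longlonglongrightarrow> m" by (rule LIMSEQ_inverse_real_of_nat_add)
    show "\<exists>N. \<forall>n\<ge>N. sum (Qr c (F n)) P \<le> m + inverse (real (Suc n))"
      using Qr_le_Er[OF nn Ffe P] F(2) by (meson less_imp_le order_trans)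
  qed
  have fev: "fe c v" unfolding fe_def
    by (rule nonneg_bdd_above_summable_on) (use fatou Qr_nonneg[OF nn] in \<open>auto simp: bdd_above_def\<close>)
  have Ev: "Er c v \<le> m" unfolding Er_def
    by (rule infsum_le_finite_sums) (use fev fatou fe_def in auto)
  have vr: "v r = 0" using conv[of r] Fr by (simp add: LIMSEQ_const_iff)
  have vx: "v x = 1" using conv[of x] Fx by (simp add: LIMSEQ_const_iff)
  have vA: "v \<in> A" using fev vr vx by (simp add: A_def)
  have Evm: "Er c v = m" using Ev mle[OF vA] by simp
  have var: "Br c v h = 0" if h: "fe c h" "h r = 0" "h x = 0" for h
  proof (rule quad_nonneg_imp[OF Er_nonneg[OF nn]], intro allI)
    fix t
    have "(\<lambda>z. v z + t * h z) \<in> A" using fe_lin[OF nn fev h(1)] h vr vx by (simp add: A_def)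
    hence "m \<le> Er c (\<lambda>z. v z + t * h z)" by (rule mle)
    also have "\<dots> = m + 2 * t * Br c v h + t\<^sup>2 * Er c h" using Er_lin[OF nn fev h(1)] Evm by simp
    finally show "0 \<le> 2 * t * Br c v h + t\<^sup>2 * Er c h" by simp
  qed
  have key: "Br c v g = m * (g x - g r)" if g: "fe c g" for g
  proof -
    define G where "G = (\<lambda>z. g z + (- g r))"
    have feG: "fe c G" unfolding G_def by (rule fe_const[OF g])
    define h where "h = (\<lambda>z. G z + (- (g x - g r)) * v z)"
    have feh: "fe c h" unfolding h_def by (rule fe_lin[OF nn feG fev])
    have "h r = 0" "h x = 0" using vr vx by (simp_all add: h_def G_def)
    hence "Br c v h = 0" using var feh by blast
    moreover have "Br c v h = Br c v G + (- (g x - g r)) * Br c v v"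
      unfolding h_def by (rule Br_lin[OF nn fev feG fev])
    moreover have "Br c v G = Br c v g" unfolding G_def by (rule Br_const)
    ultimately show ?thesis using Br_self[of c v] Evm by (simp add: algebra_simps)
  qed
  show ?thesis
  proof (rule exI[of _ "\<lambda>z. (2 / m) * v z"], intro conjI allI impI)
    show "fe c (\<lambda>z. 2 / m * v z)" by (rule fe_scale[OF fev])
    fix g assume "fe c g"
    thus "Br c (\<lambda>z. 2 / m * v z) g = 2 * (g x - g r)"
      using key Br_scale[of c "2/m" v g] mpos by simp
  qed
qed



definition Wc :: "('a \<Rightarrow> 'a \<Rightarrow> real) \<Rightarrow> ('a \<Rightarrow> complex) \<Rightarrow> 'a \<times> 'a \<Rightarrow> real" where
  "Wc c u = (\<lambda>p. c (fst p) (snd p) * (cmod (u (fst p) - u (snd p)))\<^sup>2)"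

lemma finite_energy_Wc: "finite_energy c u \<longleftrightarrow> Wc c u summable_on UNIV"
  unfolding finite_energy_def Wc_def by (simp add: case_prod_unfold)

lemma fe_of_real: "finite_energy c (\<lambda>z. complex_of_real (f z)) \<longleftrightarrow> fe c f"
proof -
  have "Wc c (\<lambda>z. complex_of_real (f z)) = Qr c f"
    by (rule ext) (simp add: Wc_def Qr_def flip: of_real_diff)
  thus ?thesis unfolding finite_energy_Wc fe_def by simp
qed

lemma fe_Re:
  assumes nn: "\<forall>a b. 0 \<le> c a b" and u: "finite_energy c u"
  shows "fe c (\<lambda>z. Re (u z))" "fe c (\<lambda>z. Im (u z))"
proof -
  have W: "Wc c u summable_on UNIV" using u finite_energy_Wc by blast
  have "\<bar>Qr c (\<lambda>z. Re (u z)) p\<bar> \<le> Wc c u p" for p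
  proof -
    have "(Re (u (fst p)) - Re (u (snd p)))\<^sup>2 = \<bar>Re (u (fst p) - u (snd p))\<bar>\<^sup>2" by simp
    also have "\<dots> \<le> (cmod (u (fst p) - u (snd p)))\<^sup>2" by (intro power_mono abs_Re_le_cmod) auto
    finally show ?thesis using nn unfolding Qr_def Wc_def
      by (simp add: abs_mult mult_left_mono)
  qed
  thus "fe c (\<lambda>z. Re (u z))" unfolding fe_def by (rule real_cmp[OF W])
  have "\<bar>Qr c (\<lambda>z. Im (u z)) p\<bar> \<le> Wc c u p" for p
  proof -
    have "(Im (u (fst p)) - Im (u (snd p)))\<^sup>2 = \<bar>Im (u (fst p) - u (snd p))\<bar>\<^sup>2" by simp
    also have "\<dots> \<le> (cmod (u (fst p) - u (snd p)))\<^sup>2" by (intro power_mono abs_Im_le_cmod) auto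
    finally show ?thesis using nn unfolding Qr_def Wc_def
      by (simp add: abs_mult mult_left_mono)
  qed
  thus "fe c (\<lambda>z. Im (u z))" unfolding fe_def by (rule real_cmp[OF W])
qed

lemma energy_real:
  assumes nn: "\<forall>a b. 0 \<le> c a b" and f: "fe c f" and u: "finite_energy c u"
  shows "energy c (\<lambda>z. complex_of_real (f z)) u =
     Complex (Br c f (\<lambda>z. Re (u z)) / 2) (Br c f (\<lambda>z. Im (u z)) / 2)"
proof -
  define T where "T = (\<lambda>(x, y). complex_of_real (c x y) * cnj (complex_of_real (f x) - complex_of_real (f y)) * (u x - u y))"
  have ReT: "Re (T p) = Rr c f (\<lambda>z. Re (u z)) p" for p
    by (cases p) (simp add: T_def Rr_def flip: of_real_diff)
  have ImT: "Im (T p) = Rr c f (\<lambda>z. Im (u z)) p" for p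
    by (cases p) (simp add: T_def Rr_def flip: of_real_diff)
  have s1: "Rr c f (\<lambda>z. Re (u z)) summable_on UNIV" by (rule Rr_summable[OF nn f fe_Re(1)[OF nn u]])
  have s2: "Rr c f (\<lambda>z. Im (u z)) summable_on UNIV" by (rule Rr_summable[OF nn f fe_Re(2)[OF nn u]])
  have a1: "(\<lambda>p. \<bar>Rr c f (\<lambda>z. Re (u z)) p\<bar>) summable_on UNIV"
    using s1 summable_on_iff_abs_summable_on_real by force
  have a2: "(\<lambda>p. \<bar>Rr c f (\<lambda>z. Im (u z)) p\<bar>) summable_on UNIV"
    using s2 summable_on_iff_abs_summable_on_real by force
  have Ts: "T summable_on UNIV"
  proof (rule cplx_cmp[OF summable_on_add[OF a1 a2]])
    fix p show "cmod (T p) \<le> \<bar>Rr c f (\<lambda>z. Re (u z)) p\<bar> + \<bar>Rr c f (\<lambda>z. Im (u z)) p\<bar>"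
      using cmod_le[of "T p"] ReT ImT by simp
  qed
  have "Re (infsum T UNIV) = Br c f (\<lambda>z. Re (u z))"
    unfolding Br_def using infsum_Re[OF Ts] ReT by simp
  moreover have "Im (infsum T UNIV) = Br c f (\<lambda>z. Im (u z))"
    unfolding Br_def using infsum_Im[OF Ts] ImT by simp
  moreover have "energy c (\<lambda>z. complex_of_real (f z)) u = 1/2 * infsum T UNIV"
    unfolding energy_def T_def by simp
  ultimately show ?thesis by (simp add: complex_eq_iff)
qed

lemma dipole_complex:
  assumes nn: "\<forall>a b. 0 \<le> c a b" and f: "fe c f" and d: "\<forall>g. fe c g \<longrightarrow> Br c f g = 2 * (g x - g r)"
  shows "is_dipole c r x (\<lambda>z. complex_of_real (f z))"
  unfolding is_dipole_def
proof (intro conjI allI impI)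
  show "finite_energy c (\<lambda>z. complex_of_real (f z))" using f fe_of_real by blast
  fix u assume u: "finite_energy c u"
  show "energy c (\<lambda>z. complex_of_real (f z)) u = u x - u r"
    using energy_real[OF nn f u] d fe_Re[OF nn u] by (simp add: complex_eq_iff)
qed

lemma laplacian_real:
  "laplacian c (\<lambda>z. complex_of_real (f z)) z = complex_of_real (\<Sum>b\<in>{b. 0 < c z b}. c z b * (f z - f b))"
  unfolding laplacian_def by simp

lemma Re_energy_self:
  assumes nn: "\<forall>a b. 0 \<le> c a b" and u: "finite_energy c u"
  shows "Re (energy c u u) = infsum (Wc c u) UNIV / 2"
proof -
  define T where "T = (\<lambda>(x, y). complex_of_real (c x y) * cnj (u x - u y) * (u x - u y))"
  have TW: "T p = complex_of_real (Wc c u p)" for p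
  proof (cases p)
    case (Pair a b)
    have "cnj (u a - u b) * (u a - u b) = complex_of_real ((cmod (u a - u b))\<^sup>2)"
      using complex_norm_square[of "u a - u b"] by (simp add: mult.commute)
    thus ?thesis using Pair by (simp add: T_def Wc_def mult.assoc)
  qed
  have W: "Wc c u summable_on UNIV" using u finite_energy_Wc by blast
  have Ts: "T summable_on UNIV"
  proof (rule cplx_cmp[OF W])
    fix p
    have "0 \<le> Wc c u p" using nn by (simp add: Wc_def)
    thus "cmod (T p) \<le> Wc c u p" by (simp add: TW)
  qed
  have "Re (infsum T UNIV) = infsum (Wc c u) UNIV"
    using infsum_Re[OF Ts] TW by simp
  moreover have "energy c u u = infsum T UNIV / 2" unfolding energy_def T_def by simp
  hence "Re (energy c u u) = Re (infsum T UNIV) / 2" by (simp only: Re_divide_numeral)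
  ultimately show ?thesis by simp
qed



lemma sq_sum_le: "((x::real) + y)\<^sup>2 \<le> 2 * x\<^sup>2 + 2 * y\<^sup>2"
proof -
  have "0 \<le> (x - y)\<^sup>2" by simp
  thus ?thesis by (simp add: power2_eq_square algebra_simps)
qed

lemma fe_cplx_lin:
  assumes nn: "\<forall>a b. 0 \<le> c a b" and f: "finite_energy c f" and g: "finite_energy c g"
  shows "finite_energy c (\<lambda>z. a * f z + g z)"
proof -
  have Wf: "Wc c f summable_on UNIV" and Wg: "Wc c g summable_on UNIV"
    using f g finite_energy_Wc by blast+
  have S: "(\<lambda>p. 2 * (cmod a)\<^sup>2 * Wc c f p + 2 * Wc c g p) summable_on UNIV"
    by (intro summable_on_add summable_on_cmult_right Wf Wg)
  have "\<bar>Wc c (\<lambda>z. a * f z + g z) p\<bar> \<le> 2 * (cmod a)\<^sup>2 * Wc c f p + 2 * Wc c g p" for p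
  proof -
    define k where "k = c (fst p) (snd p)"
    define df where "df = f (fst p) - f (snd p)"
    define dg where "dg = g (fst p) - g (snd p)"
    have k: "0 \<le> k" using nn k_def by simp
    have t: "cmod (a * df + dg) \<le> cmod (a * df) + cmod dg" by (rule norm_triangle_ineq)
    have "cmod (a * df) = cmod a * cmod df" by (rule norm_mult)
    hence t2: "cmod (a * df + dg) \<le> cmod a * cmod df + cmod dg" using t by simp
    have "(cmod (a * df + dg))\<^sup>2 \<le> (cmod a * cmod df + cmod dg)\<^sup>2"
      by (rule power_mono[OF t2 norm_ge_zero])
    also have "\<dots> \<le> 2 * (cmod a * cmod df)\<^sup>2 + 2 * (cmod dg)\<^sup>2" by (rule sq_sum_le)
    also have "(cmod a * cmod df)\<^sup>2 = (cmod a)\<^sup>2 * (cmod df)\<^sup>2" by (rule power_mult_distrib)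
    finally have "k * (cmod (a * df + dg))\<^sup>2 \<le> k * (2 * ((cmod a)\<^sup>2 * (cmod df)\<^sup>2) + 2 * (cmod dg)\<^sup>2)"
      by (rule mult_left_mono[OF _ k])
    moreover have "a * f (fst p) + g (fst p) - (a * f (snd p) + g (snd p)) = a * df + dg"
      by (simp add: df_def dg_def algebra_simps)
    hence e1: "Wc c (\<lambda>z. a * f z + g z) p = k * (cmod (a * df + dg))\<^sup>2"
      unfolding Wc_def k_def by simp
    moreover have "2 * (cmod a)\<^sup>2 * Wc c f p + 2 * Wc c g p = k * (2 * ((cmod a)\<^sup>2 * (cmod df)\<^sup>2) + 2 * (cmod dg)\<^sup>2)"
      unfolding Wc_def k_def df_def dg_def by (simp add: algebra_simps)
    moreover have "0 \<le> k * (cmod (a * df + dg))\<^sup>2" using k by simp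
    ultimately show ?thesis by simp
  qed
  hence "Wc c (\<lambda>z. a * f z + g z) summable_on UNIV" by (rule real_cmp[OF S])
  thus ?thesis using finite_energy_Wc by blast
qed

lemma domain_fe:
  assumes nn: "\<forall>a b. 0 \<le> c a b" and u: "u \<in> laplacian_domain c r"
  shows "finite_energy c u"
proof -
  obtain F a w where F: "finite F" "\<forall>x\<in>F. is_dipole c r x (w x)" "u = (\<lambda>z. \<Sum>x\<in>F. a x * w x z)"
    using u unfolding laplacian_domain_def by blast
  have W: "\<forall>x\<in>F. finite_energy c (w x)" using F(2) unfolding is_dipole_def by simp
  have "finite_energy c (\<lambda>z. \<Sum>x\<in>F. a x * w x z)" using F(1) W
  proof (induction F rule: finite_induct)
    case empty
    show ?case unfolding finite_energy_Wc Wc_def by simp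
  next
    case (insert x F)
    have 1: "finite_energy c (w x)" using insert.prems by simp
    have 2: "finite_energy c (\<lambda>z. \<Sum>x\<in>F. a x * w x z)" using insert.IH insert.prems by simp
    have "finite_energy c (\<lambda>z. a x * w x z + (\<Sum>x\<in>F. a x * w x z))"
      by (rule fe_cplx_lin[OF nn 1 2])
    moreover have "(\<lambda>z. \<Sum>x\<in>insert x F. a x * w x z) = (\<lambda>z. a x * w x z + (\<Sum>x\<in>F. a x * w x z))"
      using insert.hyps by simp
    ultimately show ?case by simp
  qed
  thus ?thesis using F(3) by simp
qed

lemma lap_bound:
  assumes cb: "conductance b" and lf: "locally_finite_net b"
    and M: "0 \<le> M" "\<forall>x y. b x y \<le> M" and D: "0 \<le> D" "\<forall>x. real (card {y. 0 < b x y}) \<le> D"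
    and u: "finite_energy b u"
  shows "finite_energy b (laplacian b u) \<and>
    infsum (Wc b (laplacian b u)) UNIV \<le> 4 * (M * D)\<^sup>2 * infsum (Wc b u) UNIV"
proof -
  have sym: "\<And>x y. b x y = b y x" and nn: "\<And>x y. 0 \<le> b x y"
    using cb unfolding conductance_def by auto
  define K where "K = M * D"
  have K: "0 \<le> K" using M D K_def by simp
  define N where "N x = {y. 0 < b x y}" for x
  have Nf: "finite (N x)" for x using lf unfolding locally_finite_net_def N_def by auto
  define g where "g = laplacian b u"
  define S where "S x = (\<Sum>y\<in>N x. b x y * (cmod (u x - u y))\<^sup>2)" for x
  have Wu: "Wc b u summable_on UNIV" using u finite_energy_Wc by blast
  have S0: "0 \<le> S x" for x unfolding S_def using nn by (simp add: sum_nonneg)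
  have gx: "(cmod (g x))\<^sup>2 \<le> K * S x" for x
  proof -
    have "cmod (g x) \<le> (\<Sum>y\<in>N x. cmod (complex_of_real (b x y) * (u x - u y)))"
      unfolding g_def laplacian_def N_def by (rule norm_sum)
    also have "\<dots> = (\<Sum>y\<in>N x. b x y * cmod (u x - u y))"
      using nn by (simp add: norm_mult)
    finally have 1: "cmod (g x) \<le> (\<Sum>y\<in>N x. b x y * cmod (u x - u y))" .
    have "(cmod (g x))\<^sup>2 \<le> (\<Sum>y\<in>N x. b x y * cmod (u x - u y))\<^sup>2"
      using 1 by (intro power_mono) auto
    also have "\<dots> \<le> (\<Sum>y\<in>N x. (b x y * cmod (u x - u y))\<^sup>2) * card (N x)"
      by (rule sum_squared_le_sum_of_squares)
    also have "(\<Sum>y\<in>N x. (b x y * cmod (u x - u y))\<^sup>2) \<le> (\<Sum>y\<in>N x. M * (b x y * (cmod (u x - u y))\<^sup>2))"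
    proof (rule sum_mono)
      fix y
      have "(b x y * cmod (u x - u y))\<^sup>2 = b x y * (b x y * (cmod (u x - u y))\<^sup>2)"
        by (simp add: power2_eq_square)
      also have "\<dots> \<le> M * (b x y * (cmod (u x - u y))\<^sup>2)"
        using M nn by (intro mult_right_mono) auto
      finally show "(b x y * cmod (u x - u y))\<^sup>2 \<le> M * (b x y * (cmod (u x - u y))\<^sup>2)" .
    qed
    also have "(\<Sum>y\<in>N x. M * (b x y * (cmod (u x - u y))\<^sup>2)) = M * S x"
      unfolding S_def by (simp add: sum_distrib_left)
    finally have "(cmod (g x))\<^sup>2 \<le> M * S x * card (N x)"
      by (simp add: mult_right_mono)
    also have "\<dots> \<le> M * S x * D"
      using D(2) M S0 unfolding N_def by (intro mult_left_mono) auto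
    finally show ?thesis by (simp add: K_def algebra_simps)
  qed
  have deg: "(\<Sum>y\<in>N x. b x y) \<le> K" for x
  proof -
    have "(\<Sum>y\<in>N x. b x y) \<le> (\<Sum>y\<in>N x. M)" using M by (intro sum_mono) auto
    also have "\<dots> = card (N x) * M" by simp
    also have "\<dots> \<le> D * M" using D(2) M unfolding N_def by (intro mult_right_mono) auto
    finally show ?thesis by (simp add: K_def mult.commute)
  qed
  define h where "h p = b (fst p) (snd p) * (cmod (g (fst p)))\<^sup>2" for p
  have h0: "0 \<le> h p" for p using nn by (simp add: h_def)
  have hb: "sum h P \<le> K\<^sup>2 * infsum (Wc b u) UNIV" if P: "finite P" for P
  proof -
    define X where "X = fst ` P"
    define T where "T = Sigma X N"
    have X: "finite X" using P X_def by simp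
    have T: "finite T" unfolding T_def using X Nf by simp
    have "sum h P \<le> sum h (P \<union> T)" using P T h0 by (intro sum_mono2) auto
    also have "\<dots> = sum h T"
    proof (rule sum.mono_neutral_right)
      show "finite (P \<union> T)" using P T by simp
      show "T \<subseteq> P \<union> T" by blast
      show "\<forall>i\<in>P \<union> T - T. h i = 0"
      proof
        fix i assume i: "i \<in> P \<union> T - T"
        hence "fst i \<in> X" "i \<notin> T" unfolding X_def by auto
        hence "\<not> 0 < b (fst i) (snd i)" unfolding T_def N_def by (cases i) auto
        hence "b (fst i) (snd i) = 0" using nn[of "fst i" "snd i"] by simp
        thus "h i = 0" by (simp add: h_def)
      qed
    qed
    also have "sum h T = (\<Sum>x\<in>X. \<Sum>y\<in>N x. b x y * (cmod (g x))\<^sup>2)"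
      unfolding T_def h_def using X Nf by (simp add: sum.Sigma case_prod_unfold)
    also have "\<dots> = (\<Sum>x\<in>X. (\<Sum>y\<in>N x. b x y) * (cmod (g x))\<^sup>2)"
      by (simp add: sum_distrib_right)
    also have "\<dots> \<le> (\<Sum>x\<in>X. K * (K * S x))"
    proof (rule sum_mono)
      fix x
      have "(\<Sum>y\<in>N x. b x y) * (cmod (g x))\<^sup>2 \<le> K * (cmod (g x))\<^sup>2"
        using deg by (intro mult_right_mono) auto
      also have "\<dots> \<le> K * (K * S x)" using gx K by (intro mult_left_mono) auto
      finally show "(\<Sum>y\<in>N x. b x y) * (cmod (g x))\<^sup>2 \<le> K * (K * S x)" .
    qed
    also have "\<dots> = K\<^sup>2 * (\<Sum>x\<in>X. S x)" by (simp add: sum_distrib_left power2_eq_square mult.assoc)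
    also have "(\<Sum>x\<in>X. S x) = sum (Wc b u) T"
      unfolding S_def T_def Wc_def using X Nf by (simp add: sum.Sigma case_prod_unfold)
    also have "sum (Wc b u) T \<le> infsum (Wc b u) UNIV"
      by (rule finite_sum_le_infsum[OF Wu T]) (auto simp: Wc_def nn)
    finally show ?thesis using K by (simp add: mult_left_mono)
  qed
  have main: "sum (Wc b g) P \<le> 4 * K\<^sup>2 * infsum (Wc b u) UNIV" if P: "finite P" for P
  proof -
    have "sum (Wc b g) P \<le> (\<Sum>p\<in>P. 2 * h p + 2 * h (prod.swap p))"
    proof (rule sum_mono)
      fix p :: "'a \<times> 'a"
      obtain x y where p: "p = (x, y)" by fastforce
      have "cmod (g x - g y) \<le> cmod (g x) + cmod (g y)" by (rule norm_triangle_ineq4)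
      hence "(cmod (g x - g y))\<^sup>2 \<le> (cmod (g x) + cmod (g y))\<^sup>2" by (intro power_mono) auto
      also have "\<dots> \<le> 2 * (cmod (g x))\<^sup>2 + 2 * (cmod (g y))\<^sup>2"
      proof -
        have "0 \<le> (cmod (g x) - cmod (g y))\<^sup>2" by simp
        thus ?thesis by (simp add: power2_eq_square algebra_simps)
      qed
      finally have "b x y * (cmod (g x - g y))\<^sup>2 \<le> b x y * (2 * (cmod (g x))\<^sup>2 + 2 * (cmod (g y))\<^sup>2)"
        using nn by (intro mult_left_mono) auto
      thus "Wc b g p \<le> 2 * h p + 2 * h (prod.swap p)"
        using p by (simp add: Wc_def h_def sym[of y x] algebra_simps)
    qed
    also have "\<dots> = 2 * sum h P + 2 * sum h (prod.swap ` P)"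
      by (simp add: sum.distrib sum_distrib_left sum.reindex)
    also have "\<dots> \<le> 2 * (K\<^sup>2 * infsum (Wc b u) UNIV) + 2 * (K\<^sup>2 * infsum (Wc b u) UNIV)"
      using hb[OF P] hb[OF finite_imageI[OF P, of prod.swap]] by linarith
    finally show ?thesis by (simp add: algebra_simps)
  qed
  have W0: "0 \<le> Wc b g p" for p using nn by (simp add: Wc_def)
  have sg: "Wc b g summable_on UNIV"
    by (rule nonneg_bdd_above_summable_on) (use main W0 in \<open>auto simp: bdd_above_def\<close>)
  have "infsum (Wc b g) UNIV \<le> 4 * K\<^sup>2 * infsum (Wc b u) UNIV"
    by (rule infsum_le_finite_sums[OF sg]) (use main in auto)
  thus ?thesis using sg finite_energy_Wc unfolding g_def K_def by blast
qed



lemma degree_bound: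
  assumes cc: "conductance c" and lf: "locally_finite_net c" and cn: "connected_net c"
    and c01: "\<forall>a b. c a b = 0 \<or> c a b = 1" and lb: "laplacian_bounded c r"
  shows "\<exists>D\<ge>0. \<forall>x. real (card {y. 0 < c x y}) \<le> D"
proof -
  obtain C where C: "\<forall>u\<in>laplacian_domain c r. finite_energy c (laplacian c u) \<and>
      sqrt (Re (energy c (laplacian c u) (laplacian c u))) \<le> C * sqrt (Re (energy c u u))"
    using lb unfolding laplacian_bounded_def by blast
  define C' where "C' = max C 0"
  have C': "0 \<le> C'" "C \<le> C'" by (auto simp: C'_def)
  have nn: "\<forall>a b. 0 \<le> c a b" and sym: "\<And>a b. c a b = c b a" and zz: "\<And>a. c a a = 0"
    using cc unfolding conductance_def by auto
  have "\<forall>z. \<exists>f. fe c f \<and> (\<forall>g. fe c g \<longrightarrow> Br c f g = 2 * (g z - g r))"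
    using dipole_real[OF cc lf cn c01] by blast
  then obtain dp where dp1: "\<And>z. fe c (dp z)" and dp2: "\<And>z g. fe c g \<Longrightarrow> Br c (dp z) g = 2 * (g z - g r)"
    by metis
  have lapd: "(\<Sum>b\<in>{b. 0 < c z b}. c z b * (dp x z - dp x b)) = delta z x - delta z r" for x z
    using Br_delta[OF cc lf, of "dp x" z] dp2[OF fe_delta[OF cc lf], of x z] by simp
  have "\<forall>x. real (card {y. 0 < c x y}) \<le> 2 * C'\<^sup>2"
  proof
    fix x
    show "real (card {y. 0 < c x y}) \<le> 2 * C'\<^sup>2"
    proof (cases "{y. 0 < c x y} = {}")
      case True thus ?thesis by simp
    next
      case False
      then obtain y where y: "0 < c x y" by blast
      have cxy: "c x y = 1" "c y x = 1" using y c01 sym by (metis less_irrefl)+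
      have xy: "x \<noteq> y" using y zz by auto
      define w where "w = (\<lambda>z. dp x z - dp y z)"
      have few: "fe c w" unfolding w_def by (rule fe_diff[OF nn dp1 dp1])
      define U where "U = (\<lambda>z. complex_of_real (w z))"
      have UD: "U \<in> laplacian_domain c r"
        unfolding laplacian_domain_def mem_Collect_eq
      proof (intro exI conjI)
        show "finite {x, y}" by simp
        show "\<forall>z\<in>{x, y}. is_dipole c r z (\<lambda>q. complex_of_real (dp z q))"
          using dipole_complex[OF nn dp1 allI[OF impI[OF dp2]]] by blast
        show "U = (\<lambda>q. \<Sum>z\<in>{x, y}. (\<lambda>z. if z = x then 1 else -1) z * (\<lambda>q. complex_of_real (dp z q)) q)"
          using xy by (auto simp: U_def w_def)
      qed
      have Cu: "sqrt (Re (energy c (laplacian c U) (laplacian c U))) \<le> C * sqrt (Re (energy c U U))"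
        using C UD by blast
      define gr where "gr z = delta z x - delta z y" for z
      have lapU: "laplacian c U = (\<lambda>z. complex_of_real (gr z))"
      proof
        fix z
        have "(\<Sum>b\<in>{b. 0 < c z b}. c z b * (w z - w b)) =
            (\<Sum>b\<in>{b. 0 < c z b}. c z b * (dp x z - dp x b)) - (\<Sum>b\<in>{b. 0 < c z b}. c z b * (dp y z - dp y b))"
          unfolding w_def
          by (simp only: sum_subtractf[symmetric]) (rule sum.cong, simp_all add: algebra_simps)
        also have "\<dots> = gr z" using lapd[where x=x and z=z] lapd[where x=y and z=z] by (simp add: gr_def)
        finally show "laplacian c U z = complex_of_real (gr z)"
          unfolding U_def laplacian_real by simp
      qed
      have fegr: "fe c gr"
        by (rule fe_finsupp[OF cc lf, of "{x, y}"]) (auto simp: gr_def delta_def)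
      have ReE: "Re (energy c (\<lambda>z. complex_of_real (f z)) (\<lambda>z. complex_of_real (f z))) = Er c f / 2"
        if "fe c f" for f
        using energy_real[OF nn that iffD2[OF fe_of_real that]] Br_self[of c f] by simp
      have Ew: "Er c w \<le> 2"
      proof -
        have "Br c w w = Br c w (dp x) - Br c w (dp y)"
          by (subst (2) w_def) (rule Br_diff[OF nn few dp1 dp1])
        also have "\<dots> = 2 * (w x - w r) - 2 * (w y - w r)"
          using dp2[OF few, of x] dp2[OF few, of y] Br_sym[of c w] by simp
        finally have 1: "Er c w = 2 * (w x - w y)" using Br_self[of c w] by simp
        have "sum (Qr c w) {(x, y), (y, x)} \<le> Er c w" by (rule Qr_le_Er[OF nn few]) simp
        moreover have "sum (Qr c w) {(x, y), (y, x)} = 2 * (w x - w y)\<^sup>2"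
          using xy cxy by (simp add: Qr_def power2_commute)
        ultimately have "2 * (w x - w y)\<^sup>2 \<le> 2 * (w x - w y)" using 1 by simp
        hence "w x - w y \<le> 1"
          by (smt (verit) power2_eq_square mult_less_cancel_left1)
        thus ?thesis using 1 by simp
      qed
      have Ew0: "0 \<le> Er c w" by (rule Er_nonneg[OF nn])
      have Eg: "real (card {y. 0 < c x y}) \<le> Er c gr"
      proof -
        define N where "N = {y. 0 < c x y}"
        have Nf: "finite N" using lf unfolding N_def locally_finite_net_def by auto
        have "real (card N) = (\<Sum>b\<in>N. 1)" by simp
        also have "\<dots> \<le> (\<Sum>b\<in>N. Qr c gr (x, b))"
        proof (rule sum_mono)
          fix b assume b: "b \<in> N"
          hence cb: "c x b = 1" using c01 unfolding N_def by (metis less_irrefl mem_Collect_eq)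
          have bx: "b \<noteq> x" using b zz unfolding N_def by auto
          have "gr x = 1" using xy by (simp add: gr_def delta_def)
          moreover have "gr b = 0 \<or> gr b = -1" using bx by (simp add: gr_def delta_def)
          ultimately show "1 \<le> Qr c gr (x, b)" using cb by (auto simp: Qr_def)
        qed
        also have "\<dots> = sum (Qr c gr) (Pair x ` N)"
          by (rule sum.reindex[symmetric, unfolded comp_def]) (simp add: inj_on_def)
        also have "\<dots> \<le> Er c gr" by (rule Qr_le_Er[OF nn fegr]) (use Nf in simp)
        finally show ?thesis unfolding N_def .
      qed
      have "sqrt (real (card {y. 0 < c x y}) / 2) \<le> sqrt (Er c gr / 2)"
        using Eg by simp
      also have "\<dots> = sqrt (Re (energy c (laplacian c U) (laplacian c U)))"
        using ReE[OF fegr] lapU by simp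
      also have "\<dots> \<le> C * sqrt (Re (energy c U U))" by (rule Cu)
      also have "Re (energy c U U) = Er c w / 2" unfolding U_def by (rule ReE[OF few])
      also have "C * sqrt (Er c w / 2) \<le> C' * sqrt (Er c w / 2)"
        using C' Ew0 by (intro mult_right_mono) auto
      also have "\<dots> \<le> C' * 1" using C' Ew Ew0 by (intro mult_left_mono) auto
      finally have s: "sqrt (real (card {y. 0 < c x y}) / 2) \<le> C'" by simp
      have "real (card {y. 0 < c x y}) / 2 = (sqrt (real (card {y. 0 < c x y}) / 2))\<^sup>2" by simp
      also have "\<dots> \<le> C'\<^sup>2" by (rule power_mono[OF s]) simp
      finally show ?thesis by simp
    qed
  qed
  thus ?thesis using C' by (intro exI[of _ "2 * C'\<^sup>2"]) auto
qed

theorem corollary3p14: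
  fixes c b :: "'a::countable \<Rightarrow> 'a \<Rightarrow> real" and r :: 'a
  assumes "conductance c" and "locally_finite_net c" and "connected_net c"
    and "\<forall>x y. c x y = 0 \<or> c x y = 1"
    and "laplacian_bounded c r"
    and "conductance b" and "locally_finite_net b" and "connected_net b"
    and "bounded_conductance b"
    and "\<forall>x y. c x y = 0 \<longrightarrow> b x y = 0"
  shows "laplacian_bounded b r"
proof -
  obtain D where D: "0 \<le> D" "\<forall>x. real (card {y. 0 < c x y}) \<le> D"
    using degree_bound[OF assms(1-5)] by blast
  obtain M0 where M0: "\<forall>x y. b x y \<le> M0" using assms(9) unfolding bounded_conductance_def by blast
  define M where "M = max M0 0"
  have M: "0 \<le> M" "\<forall>x y. b x y \<le> M" using M0 by (auto simp: M_def intro: le_max_iff_disj[THEN iffD2])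
  have nnb: "\<forall>x y. 0 \<le> b x y" using assms(6) unfolding conductance_def by auto
  have Db: "\<forall>x. real (card {y. 0 < b x y}) \<le> D"
  proof
    fix x
    have sub: "{y. 0 < b x y} \<subseteq> {y. 0 < c x y}"
    proof
      fix y assume "y \<in> {y. 0 < b x y}"
      hence "c x y \<noteq> 0" using assms(10) by auto
      hence "c x y = 1" using assms(4) by blast
      thus "y \<in> {y. 0 < c x y}" by simp
    qed
    have "finite {y. 0 < c x y}" using assms(2) unfolding locally_finite_net_def by blast
    hence "card {y. 0 < b x y} \<le> card {y. 0 < c x y}" using sub by (rule card_mono)
    thus "real (card {y. 0 < b x y}) \<le> D" using D(2)[rule_format, of x] by linarith
  qed
  define K where "K = M * D"
  have K: "0 \<le> K" using M D K_def by simp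
  show ?thesis unfolding laplacian_bounded_def
  proof (intro exI[of _ "2 * K"] ballI)
    fix u assume u: "u \<in> laplacian_domain b r"
    have fu: "finite_energy b u" by (rule domain_fe[OF nnb u])
    have L: "finite_energy b (laplacian b u) \<and>
      infsum (Wc b (laplacian b u)) UNIV \<le> 4 * K\<^sup>2 * infsum (Wc b u) UNIV"
      using lap_bound[OF assms(6,7) M D(1) Db fu] unfolding K_def .
    have W0: "0 \<le> infsum (Wc b u) UNIV" by (rule infsum_nonneg) (simp add: Wc_def nnb)
    have "sqrt (Re (energy b (laplacian b u) (laplacian b u))) = sqrt (infsum (Wc b (laplacian b u)) UNIV / 2)"
      using Re_energy_self[OF nnb] L by simp
    also have "\<dots> \<le> sqrt (4 * K\<^sup>2 * infsum (Wc b u) UNIV / 2)"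
      using L by (intro real_sqrt_le_mono divide_right_mono) auto
    also have "\<dots> = sqrt ((2 * K)\<^sup>2) * sqrt (infsum (Wc b u) UNIV / 2)"
      by (simp add: real_sqrt_mult[symmetric] power_mult_distrib)
    also have "\<dots> = 2 * K * sqrt (Re (energy b u u))"
    proof -
      have "sqrt ((2 * K)\<^sup>2) = \<bar>2 * K\<bar>" by (rule real_sqrt_abs)
      hence "sqrt ((2 * K)\<^sup>2) = 2 * K" using K by linarith
      moreover have "infsum (Wc b u) UNIV / 2 = Re (energy b u u)" using Re_energy_self[OF nnb fu] by simp
      ultimately show ?thesis by (simp only:)
    qed
    finally show "finite_energy b (laplacian b u) \<and>
        sqrt (Re (energy b (laplacian b u) (laplacian b u))) \<le> 2 * K * sqrt (Re (energy b u u))"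
      using L by simp
  qed
qed

end
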